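(* If $\Gamma\vdash_r M:\delta\mid\Delta$ (derivable in the restricted type system) for some restricted basis $\Gamma$, restricted name context $\Delta$ and $\delta\in\Lambda^r_D$, then $M$ is strongly normalising.
   Context: $\lambda\mu$ terms and commands: $M::=x\mid\lambda x.M\mid MN\mid\mu\alpha.\mathsf C$ and $\mathsf C::=[\alpha]M$. Structural substitution $T[\alpha\Leftarrow L]$ replaces, recursively, every subterm $[\alpha]N$ by $[\alpha](N[\alpha\Leftarrow L])L$. $M$ is strongly normalising if there is no infinite reduction sequence from $M$ for the compatible closure of $(\lambda x.M)N\to M[N/x]$ and $(\mu\alpha.\mathsf C)N\to\mu\alpha.\mathsf C[\alpha\Leftarrow N]$. (The paper notes that adding the renaming rule $[\alpha]\mu\beta.\mathsf C\to\mathsf C[\alpha/\beta]$ does not change this set.) Full type system. $R=\{\bot\sqsubset\top\}$ and $\psi=\psi_\top$. - $\Lambda_R$: $\rho::=\psi_a\mid\omega\mid\rho\wedge\rho$; - $\Lambda_D$: $\delta::=\rho\mid\kappa\to\rho\mid\omega\mid\delta\wedge\delta$; - $\Lambda_C$: $\kappa::=\delta\times\kappa\mid\omega\mid\kappa\wedge\kappa$. The relations $\le_R,\le_D,\le_C$ are the least reflexive, transitive relations with $\sigma\wedge\tau\le\sigma,\tau$, $\sigma\le\omega$, $\rho\le\sigma,\tau\Rightarrow\rho\le\sigma\wedge\tau$, and additionally: - $\psi_\bot\sim\omega$ and $\psi_{a\sqcup b}\sim\psi_a\wedge\psi_b$; - $\le_R\subseteq\le_D$; - $\omega\le_D\omega\to\omega$;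 - $\psi_a\le_D\omega\to\psi_a\le_D\psi_a$; - $\omega\le_C\omega\times\omega$; - $(\kappa\to\rho_1)\wedge(\kappa\to\rho_2)\le_D\kappa\to(\rho_1\wedge\rho_2)$; - $(\delta_1\times\kappa_1)\wedge(\delta_2\times\kappa_2)\le_C(\delta_1\wedge\delta_2)\times(\kappa_1\wedge\kappa_2)$; - $\to$ is contravariant in $\Lambda_C$ and covariant in $\Lambda_R$; - $\times$ is covariant in both arguments. Assignment rules, with bases $\Gamma$ (finite maps variables $\to\Lambda_D$), contexts $\Delta$ (finite maps names $\to\Lambda_C$), and $\Gamma(x)$, $\Delta(\alpha)$ equal to $\omega$ outside the domain: - (Ax) $\Gamma,x{:}\delta\vdash x:\delta\mid\Delta$. - (Abs) From $\Gamma\vdash M:\kappa\to\rho\mid\Delta$, $\Gamma(x)=\delta$, infer $\Gamma\setminus x\vdash\lambda x.M:(\delta\times\kappa)\to\rho\mid\Delta$. - (App) From $\Gamma\vdash M:(\delta\times\kappa)\to\rho\mid\Delta$ and $\Gamma\vdash N:\delta\mid\Delta$, infer $\Gamma\vdash MN:\kappa\to\rho\mid\Delta$. - (Cmd) From $\Gamma\vdash M:\delta\mid\Delta$, $\Delta(\alpha)=\kappa$, infer $\Gamma\vdash[\alpha]M:\delta\times\kappa\mid\Delta$. - ($\mu$) From $\Gamma\vdash\mathsf C:(\kappa'\to\rho)\times\kappa'\mid\Delta$, $\Delta(\alpha)=\kappa$, infer $\Gamma\vdash\mu\alpha.\mathsf C:\kappa\to\rho\mid\Delta\setminus\alpha$.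 - ($\wedge$), ($\omega$) ($T:\omega$), and ($\le$) subsumption. Restricted system. Restricted types: $\Lambda^r_D$: $\delta::=\kappa\to\psi\mid\delta\wedge\delta$; $\Lambda^r_C$: $\kappa::=\omega\mid\delta\times\kappa\mid\kappa\wedge\kappa$. A restricted basis (resp. context) assigns only types in $\Lambda^r_D$ (resp. $\Lambda^r_C$). A judgement is restricted if its basis and context are restricted and its predicate is in $\Lambda^r_D\cup\Lambda^r_C$. $\Gamma\vdash_r T:\sigma\mid\Delta$ means the judgement is derivable with the rules above, without rule ($\omega$), and with every judgement in the derivation restricted. *)

theory Defs
  imports Main
begin

text \<open>Variables and names are two separate de Bruijn index spaces.
  Lam binds variable 0, Mu binds name 0.  Named a M is the command [a]M.\<close>

datatype trm = Var nat | Lam trm | App trm trm | Mu cmd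
     and cmd = Named nat trm

primrec liftV :: "nat \<Rightarrow> trm \<Rightarrow> trm" and liftVc :: "nat \<Rightarrow> cmd \<Rightarrow> cmd" where
  "liftV k (Var i) = (if i < k then Var i else Var (Suc i))"
| "liftV k (Lam M) = Lam (liftV (Suc k) M)"
| "liftV k (App M N) = App (liftV k M) (liftV k N)"
| "liftV k (Mu C) = Mu (liftVc k C)"
| "liftVc k (Named a M) = Named a (liftV k M)"

primrec liftN :: "nat \<Rightarrow> trm \<Rightarrow> trm" and liftNc :: "nat \<Rightarrow> cmd \<Rightarrow> cmd" where
  "liftN k (Var i) = Var i"
| "liftN k (Lam M) = Lam (liftN k M)"
| "liftN k (App M N) = App (liftN k M) (liftN k N)"
| "liftN k (Mu C) = Mu (liftNc (Suc k) C)"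
| "liftNc k (Named a M) = Named (if a < k then a else Suc a) (liftN k M)"

primrec substV :: "trm \<Rightarrow> nat \<Rightarrow> trm \<Rightarrow> trm" and substVc :: "cmd \<Rightarrow> nat \<Rightarrow> trm \<Rightarrow> cmd" where
  "substV (Var i) k N = (if i < k then Var i else if i = k then N else Var (i - 1))"
| "substV (Lam M) k N = Lam (substV M (Suc k) (liftV 0 N))"
| "substV (App M M') k N = App (substV M k N) (substV M' k N)"
| "substV (Mu C) k N = Mu (substVc C k (liftN 0 N))"
| "substVc (Named a M) k N = Named a (substV M k N)"

text \<open>Structural substitution T[k <= L]: every [k]N becomes [k](N[k <= L]) L.\<close>
primrec sstruct :: "trm \<Rightarrow> nat \<Rightarrow> trm \<Rightarrow> trm" and sstructc :: "cmd \<Rightarrow> nat \<Rightarrow> trm \<Rightarrow> cmd" where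
  "sstruct (Var i) k L = Var i"
| "sstruct (Lam M) k L = Lam (sstruct M k (liftV 0 L))"
| "sstruct (App M N) k L = App (sstruct M k L) (sstruct N k L)"
| "sstruct (Mu C) k L = Mu (sstructc C (Suc k) (liftN 0 L))"
| "sstructc (Named a M) k L =
     (if a = k then Named a (App (sstruct M k L) L) else Named a (sstruct M k L))"

inductive red :: "trm \<Rightarrow> trm \<Rightarrow> bool" and redc :: "cmd \<Rightarrow> cmd \<Rightarrow> bool" where
  beta: "red (App (Lam M) N) (substV M 0 N)"
| mu:   "red (App (Mu C) N) (Mu (sstructc C 0 (liftN 0 N)))"
| lam:  "red M M' \<Longrightarrow> red (Lam M) (Lam M')"
| appL: "red M M' \<Longrightarrow> red (App M N) (App M' N)"
| appR: "red N N' \<Longrightarrow> red (App M N) (App M N')"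
| muC:  "redc C C' \<Longrightarrow> red (Mu C) (Mu C')"
| named: "red M M' \<Longrightarrow> redc (Named a M) (Named a M')"

definition SN :: "trm \<Rightarrow> bool" where
  "SN M \<longleftrightarrow> \<not> (\<exists>f. f 0 = M \<and> (\<forall>i. red (f i) (f (Suc i))))"

datatype lev = Bot | Top

fun lsup :: "lev \<Rightarrow> lev \<Rightarrow> lev" where
  "lsup Bot b = b"
| "lsup Top b = Top"

text \<open>One syntax for all three sorts; Arr k r is k \<rightarrow> r, Prod d k is d \<times> k.\<close>
datatype ty = Psi lev | Om | Meet ty ty | Arr ty ty | Prod ty ty

inductive inR :: "ty \<Rightarrow> bool" where
  "inR (Psi a)" | "inR Om" | "inR a \<Longrightarrow> inR b \<Longrightarrow> inR (Meet a b)"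

inductive inD :: "ty \<Rightarrow> bool" and inC :: "ty \<Rightarrow> bool" where
  "inR r \<Longrightarrow> inD r"
| "inC k \<Longrightarrow> inR r \<Longrightarrow> inD (Arr k r)"
| "inD Om"
| "inD a \<Longrightarrow> inD b \<Longrightarrow> inD (Meet a b)"
| "inD d \<Longrightarrow> inC k \<Longrightarrow> inC (Prod d k)"
| "inC Om"
| "inC a \<Longrightarrow> inC b \<Longrightarrow> inC (Meet a b)"

inductive leqR :: "ty \<Rightarrow> ty \<Rightarrow> bool" where
  R_refl: "inR a \<Longrightarrow> leqR a a"
| R_trans: "leqR a b \<Longrightarrow> leqR b c \<Longrightarrow> leqR a c"
| R_meetL: "inR a \<Longrightarrow> inR b \<Longrightarrow> leqR (Meet a b) a"
| R_meetR: "inR a \<Longrightarrow> inR b \<Longrightarrow> leqR (Meet a b) b"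
| R_top: "inR a \<Longrightarrow> leqR a Om"
| R_glb: "leqR r a \<Longrightarrow> leqR r b \<Longrightarrow> leqR r (Meet a b)"
| R_bot1: "leqR (Psi Bot) Om"
| R_bot2: "leqR Om (Psi Bot)"
| R_join1: "leqR (Psi (lsup a b)) (Meet (Psi a) (Psi b))"
| R_join2: "leqR (Meet (Psi a) (Psi b)) (Psi (lsup a b))"

inductive leqD :: "ty \<Rightarrow> ty \<Rightarrow> bool" and leqC :: "ty \<Rightarrow> ty \<Rightarrow> bool" where
  D_refl: "inD a \<Longrightarrow> leqD a a"
| D_trans: "leqD a b \<Longrightarrow> leqD b c \<Longrightarrow> leqD a c"
| D_meetL: "inD a \<Longrightarrow> inD b \<Longrightarrow> leqD (Meet a b) a"
| D_meetR: "inD a \<Longrightarrow> inD b \<Longrightarrow> leqD (Meet a b) b"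
| D_top: "inD a \<Longrightarrow> leqD a Om"
| D_glb: "leqD r a \<Longrightarrow> leqD r b \<Longrightarrow> leqD r (Meet a b)"
| D_R: "leqR a b \<Longrightarrow> leqD a b"
| D_om: "leqD Om (Arr Om Om)"
| D_psi1: "leqD (Psi a) (Arr Om (Psi a))"
| D_psi2: "leqD (Arr Om (Psi a)) (Psi a)"
| D_arrmeet: "inC k \<Longrightarrow> inR r1 \<Longrightarrow> inR r2 \<Longrightarrow>
     leqD (Meet (Arr k r1) (Arr k r2)) (Arr k (Meet r1 r2))"
| D_arr: "leqC k' k \<Longrightarrow> leqR r r' \<Longrightarrow> leqD (Arr k r) (Arr k' r')"
| C_refl: "inC a \<Longrightarrow> leqC a a"
| C_trans: "leqC a b \<Longrightarrow> leqC b c \<Longrightarrow> leqC a c"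
| C_meetL: "inC a \<Longrightarrow> inC b \<Longrightarrow> leqC (Meet a b) a"
| C_meetR: "inC a \<Longrightarrow> inC b \<Longrightarrow> leqC (Meet a b) b"
| C_top: "inC a \<Longrightarrow> leqC a Om"
| C_glb: "leqC r a \<Longrightarrow> leqC r b \<Longrightarrow> leqC r (Meet a b)"
| C_om: "leqC Om (Prod Om Om)"
| C_prodmeet: "inD d1 \<Longrightarrow> inD d2 \<Longrightarrow> inC k1 \<Longrightarrow> inC k2 \<Longrightarrow>
     leqC (Meet (Prod d1 k1) (Prod d2 k2)) (Prod (Meet d1 d2) (Meet k1 k2))"
| C_prod: "leqD d d' \<Longrightarrow> leqC k k' \<Longrightarrow> leqC (Prod d k) (Prod d' k')"

text \<open>Restricted types (psi = Psi Top).\<close>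
inductive rD :: "ty \<Rightarrow> bool" and rC :: "ty \<Rightarrow> bool" where
  "rC k \<Longrightarrow> rD (Arr k (Psi Top))"
| "rD a \<Longrightarrow> rD b \<Longrightarrow> rD (Meet a b)"
| "rC Om"
| "rD d \<Longrightarrow> rC k \<Longrightarrow> rC (Prod d k)"
| "rC a \<Longrightarrow> rC b \<Longrightarrow> rC (Meet a b)"

type_synonym env = "nat \<Rightarrow> ty option"

definition look :: "env \<Rightarrow> nat \<Rightarrow> ty" where
  "look E i = (case E i of None \<Rightarrow> Om | Some t \<Rightarrow> t)"

text \<open>Removing the binder at index 0 (Gamma without x, Delta without alpha).\<close>
definition dropE :: "env \<Rightarrow> env" where
  "dropE E = (\<lambda>i. E (Suc i))"

definition rbasis :: "env \<Rightarrow> bool" where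
  "rbasis G \<longleftrightarrow> finite (dom G) \<and> (\<forall>t\<in>ran G. rD t)"

definition rctxt :: "env \<Rightarrow> bool" where
  "rctxt D \<longleftrightarrow> finite (dom D) \<and> (\<forall>t\<in>ran D. rC t)"

definition rjudg :: "env \<Rightarrow> env \<Rightarrow> ty \<Rightarrow> bool" where
  "rjudg G D s \<longleftrightarrow> rbasis G \<and> rctxt D \<and> (rD s \<or> rC s)"

text \<open>rtyp G M s D : the judgement G |- M : s | D is derivable with all rules except (omega),
  every judgement in the derivation being restricted (checked at each rule's conclusion).\<close>
inductive rtyp :: "env \<Rightarrow> trm \<Rightarrow> ty \<Rightarrow> env \<Rightarrow> bool"
  and rtypc :: "env \<Rightarrow> cmd \<Rightarrow> ty \<Rightarrow> env \<Rightarrow> bool" where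
  Ax: "G x = Some d \<Longrightarrow> rjudg G D d \<Longrightarrow> rtyp G (Var x) d D"
| Abs: "rtyp G M (Arr k r) D \<Longrightarrow> rjudg (dropE G) D (Arr (Prod (look G 0) k) r) \<Longrightarrow>
     rtyp (dropE G) (Lam M) (Arr (Prod (look G 0) k) r) D"
| App: "rtyp G M (Arr (Prod d k) r) D \<Longrightarrow> rtyp G N d D \<Longrightarrow> rjudg G D (Arr k r) \<Longrightarrow>
     rtyp G (App M N) (Arr k r) D"
| Cmd: "rtyp G M d D \<Longrightarrow> rjudg G D (Prod d (look D a)) \<Longrightarrow>
     rtypc G (Named a M) (Prod d (look D a)) D"
| MuR: "rtypc G C (Prod (Arr k' r) k') D \<Longrightarrow> rjudg G (dropE D) (Arr (look D 0) r) \<Longrightarrow>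
     rtyp G (Mu C) (Arr (look D 0) r) (dropE D)"
| MeetT: "rtyp G M s D \<Longrightarrow> rtyp G M t D \<Longrightarrow> rjudg G D (Meet s t) \<Longrightarrow> rtyp G M (Meet s t) D"
| MeetC: "rtypc G C s D \<Longrightarrow> rtypc G C t D \<Longrightarrow> rjudg G D (Meet s t) \<Longrightarrow> rtypc G C (Meet s t) D"
| SubT: "rtyp G M s D \<Longrightarrow> leqD s t \<Longrightarrow> rjudg G D t \<Longrightarrow> rtyp G M t D"
| SubC: "rtypc G C s D \<Longrightarrow> leqC s t \<Longrightarrow> rjudg G D t \<Longrightarrow> rtypc G C t D"

end

theory Submission
  imports Defs
begin


primrec apps :: "trm \<Rightarrow> trm list \<Rightarrow> trm" where
  "apps M [] = M"
| "apps M (N # S) = apps (App M N) S"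

lemma apps_append[simp]: "apps M (S @ S') = apps (apps M S) S'"
  by (induction S arbitrary: M) auto

definition upV :: "(nat \<Rightarrow> trm) \<Rightarrow> nat \<Rightarrow> trm" where
  "upV s i = (case i of 0 \<Rightarrow> Var 0 | Suc j \<Rightarrow> liftV 0 (s j))"
definition upZ :: "(nat \<Rightarrow> nat) \<Rightarrow> nat \<Rightarrow> nat" where
  "upZ z a = (case a of 0 \<Rightarrow> 0 | Suc b \<Rightarrow> Suc (z b))"
definition upT :: "(nat \<Rightarrow> trm list) \<Rightarrow> nat \<Rightarrow> trm list" where
  "upT t a = (case a of 0 \<Rightarrow> [] | Suc b \<Rightarrow> map (liftN 0) (t b))"

primrec sub :: "trm \<Rightarrow> (nat \<Rightarrow> trm) \<Rightarrow> (nat \<Rightarrow> nat) \<Rightarrow> (nat \<Rightarrow> trm list) \<Rightarrow> trm"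
  and subc :: "cmd \<Rightarrow> (nat \<Rightarrow> trm) \<Rightarrow> (nat \<Rightarrow> nat) \<Rightarrow> (nat \<Rightarrow> trm list) \<Rightarrow> cmd" where
  "sub (Var i) s z t = s i"
| "sub (Lam M) s z t = Lam (sub M (upV s) z (\<lambda>a. map (liftV 0) (t a)))"
| "sub (App M N) s z t = App (sub M s z t) (sub N s z t)"
| "sub (Mu C) s z t = Mu (subc C (\<lambda>i. liftN 0 (s i)) (upZ z) (upT t))"
| "subc (Named a M) s z t = Named (z a) (apps (sub M s z t) (t a))"

lemma upV_Var[simp]: "upV Var = Var"
  by (rule ext) (simp add: upV_def split: nat.split)
lemma upV_Var': "upV (\<lambda>i. Var (f i)) = (\<lambda>i. Var (case i of 0 \<Rightarrow> 0 | Suc j \<Rightarrow> Suc (f j)))"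
  by (rule ext) (simp add: upV_def split: nat.split)
lemma upZ_id[simp]: "upZ id = id" "upZ (\<lambda>x. x) = (\<lambda>x. x)"
  by (rule ext, simp add: upZ_def split: nat.split)+
lemma upT_nil[simp]: "upT (\<lambda>_. []) = (\<lambda>_. [])"
  by (rule ext) (simp add: upT_def split: nat.split)

lemma liftN_Var[simp]: "liftN k (Var i) = Var i" by simp

lemma sub_id: "sub M Var id (\<lambda>_. []) = M" "subc C Var id (\<lambda>_. []) = C"
  by (induction M and C) auto

lemma liftV_sub: "liftV k M = sub M (\<lambda>i. if i < k then Var i else Var (Suc i)) id (\<lambda>_. [])"
  "liftVc k C = subc C (\<lambda>i. if i < k then Var i else Var (Suc i)) id (\<lambda>_. [])"
proof (induction M and C arbitrary: k and k)
  case (Lam M)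
  have "upV (\<lambda>i. if i < k then Var i else Var (Suc i)) = (\<lambda>i. if i < Suc k then Var i else Var (Suc i))"
    by (rule ext) (simp add: upV_def split: nat.split)
  then show ?case using Lam by simp
next
  case (Mu C)
  have "(\<lambda>i. liftN 0 (if i < k then Var i else Var (Suc i))) = (\<lambda>i. if i < k then Var i else Var (Suc i))"
    by (rule ext) simp
  then show ?case using Mu by simp
qed auto

lemma liftV0_sub: "liftV 0 M = sub M (\<lambda>i. Var (Suc i)) id (\<lambda>_. [])"
  using liftV_sub(1)[of 0 M] by simp

lemma liftN_sub: "liftN k M = sub M Var (\<lambda>a. if a < k then a else Suc a) (\<lambda>_. [])"
  "liftNc k C = subc C Var (\<lambda>a. if a < k then a else Suc a) (\<lambda>_. [])"
proof (induction M and C arbitrary: k and k)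
  case (Mu C)
  have "upZ (\<lambda>a. if a < k then a else Suc a) = (\<lambda>a. if a < Suc k then a else Suc a)"
    by (rule ext) (simp add: upZ_def split: nat.split)
  then show ?case using Mu by simp
qed auto

lemma liftN0_sub: "liftN 0 M = sub M Var Suc (\<lambda>_. [])"
  using liftN_sub(1)[of 0 M] by simp

lemma sub_apps: "sub (apps M S) s z t = apps (sub M s z t) (map (\<lambda>N. sub N s z t) S)"
  by (induction S arbitrary: M) auto

lemma sub_ren:
  "sub (sub M (\<lambda>i. Var (f i)) z (\<lambda>_. [])) s' z' t' = sub M (\<lambda>i. s' (f i)) (\<lambda>a. z' (z a)) (\<lambda>a. t' (z a))"
  "subc (subc C (\<lambda>i. Var (f i)) z (\<lambda>_. [])) s' z' t' = subc C (\<lambda>i. s' (f i)) (\<lambda>a. z' (z a)) (\<lambda>a. t' (z a))"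
proof (induction M and C arbitrary: f z s' z' t' and f z s' z' t')
  case (Lam M)
  have "upV (\<lambda>i. Var (f i)) = (\<lambda>i. Var (case i of 0 \<Rightarrow> 0 | Suc j \<Rightarrow> Suc (f j)))" by (rule upV_Var')
  moreover have "(\<lambda>i. upV s' (case i of 0 \<Rightarrow> 0 | Suc j \<Rightarrow> Suc (f j))) = upV (\<lambda>i. s' (f i))"
    by (rule ext) (simp add: upV_def split: nat.split)
  ultimately show ?case using Lam by simp
next
  case (Mu C)
  have "(\<lambda>a. upZ z' (upZ z a)) = upZ (\<lambda>a. z' (z a))"
    by (rule ext) (simp add: upZ_def split: nat.split)
  moreover have "(\<lambda>a. upT t' (upZ z a)) = upT (\<lambda>a. t' (z a))"
    by (rule ext) (simp add: upZ_def upT_def split: nat.split)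
  ultimately show ?case using Mu by simp
qed (auto simp: sub_apps)

lemma sub_ren_Var:
  "sub (sub M Var z (\<lambda>_. [])) s' z' t' = sub M s' (\<lambda>a. z' (z a)) (\<lambda>a. t' (z a))"
  "subc (subc C Var z (\<lambda>_. [])) s' z' t' = subc C s' (\<lambda>a. z' (z a)) (\<lambda>a. t' (z a))"
  using sub_ren[where f="\<lambda>i. i"] by simp_all

lemma liftV0_fun: "liftV 0 = (\<lambda>M. sub M (\<lambda>i. Var (Suc i)) id (\<lambda>_. []))"
  by (rule ext) (rule liftV0_sub)
lemma liftN0_fun: "liftN 0 = (\<lambda>M. sub M Var Suc (\<lambda>_. []))"
  by (rule ext) (rule liftN0_sub)

lemma liftV0_ren: "liftV 0 (sub X (\<lambda>i. Var (f i)) z (\<lambda>_. [])) = sub X (\<lambda>i. Var (Suc (f i))) z (\<lambda>_. [])"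
  by (simp add: liftV0_sub sub_ren)
lemma ren_liftV0: "sub (liftV 0 X) (\<lambda>i. Var (g i)) z (\<lambda>_. []) = sub X (\<lambda>i. Var (g (Suc i))) z (\<lambda>_. [])"
  by (simp add: liftV0_sub sub_ren)
lemma liftN0_ren: "liftN 0 (sub X (\<lambda>i. Var (f i)) z (\<lambda>_. [])) = sub X (\<lambda>i. Var (f i)) (\<lambda>a. Suc (z a)) (\<lambda>_. [])"
  by (simp add: liftN0_sub sub_ren)
lemma ren_liftN0: "sub (liftN 0 X) (\<lambda>i. Var (g i)) z (\<lambda>_. []) = sub X (\<lambda>i. Var (g i)) (\<lambda>a. z (Suc a)) (\<lambda>_. [])"
  by (simp add: liftN0_sub sub_ren_Var)

lemma ren_sub:
  "sub (sub M s z t) (\<lambda>i. Var (f i)) z' (\<lambda>_. []) =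
     sub M (\<lambda>i. sub (s i) (\<lambda>i. Var (f i)) z' (\<lambda>_. [])) (\<lambda>a. z' (z a))
       (\<lambda>a. map (\<lambda>N. sub N (\<lambda>i. Var (f i)) z' (\<lambda>_. [])) (t a))"
  "subc (subc C s z t) (\<lambda>i. Var (f i)) z' (\<lambda>_. []) =
     subc C (\<lambda>i. sub (s i) (\<lambda>i. Var (f i)) z' (\<lambda>_. [])) (\<lambda>a. z' (z a))
       (\<lambda>a. map (\<lambda>N. sub N (\<lambda>i. Var (f i)) z' (\<lambda>_. [])) (t a))"
proof (induction M and C arbitrary: s z t f z' and s z t f z')
  case (Lam M)
  define g where "g = (\<lambda>i. case i of 0 \<Rightarrow> 0 | Suc j \<Rightarrow> Suc (f j))"
  have u: "upV (\<lambda>i. Var (f i)) = (\<lambda>i. Var (g i))" unfolding g_def by (rule upV_Var')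
  have k: "\<And>X. sub (liftV 0 X) (\<lambda>i. Var (g i)) z' (\<lambda>_. []) = liftV 0 (sub X (\<lambda>i. Var (f i)) z' (\<lambda>_. []))"
    by (simp add: ren_liftV0 liftV0_ren g_def)
  have e1: "(\<lambda>i. sub (upV s i) (\<lambda>i. Var (g i)) z' (\<lambda>_. [])) = upV (\<lambda>i. sub (s i) (\<lambda>i. Var (f i)) z' (\<lambda>_. []))"
    apply (rule ext) apply (case_tac i) apply (simp add: upV_def g_def) apply (simp add: upV_def k) done
  have e2: "(\<lambda>a. map (\<lambda>N. sub N (\<lambda>i. Var (g i)) z' (\<lambda>_. [])) (map (liftV 0) (t a))) =
     (\<lambda>a. map (liftV 0) (map (\<lambda>N. sub N (\<lambda>i. Var (f i)) z' (\<lambda>_. [])) (t a)))"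
    by (simp add: k o_def)
  show ?case using Lam[of "upV s" z "\<lambda>a. map (liftV 0) (t a)" g z'] by (simp add: u e1 e2 del: map_map)
next
  case (Mu C)
  have k: "\<And>X. sub (liftN 0 X) (\<lambda>i. Var (f i)) (upZ z') (\<lambda>_. []) = liftN 0 (sub X (\<lambda>i. Var (f i)) z' (\<lambda>_. []))"
    by (simp add: ren_liftN0 liftN0_ren upZ_def)
  have e0: "(\<lambda>i. liftN 0 (Var (f i))) = (\<lambda>i. Var (f i))" by simp
  have e1: "(\<lambda>a. upZ z' (upZ z a)) = upZ (\<lambda>a. z' (z a))"
    by (rule ext) (simp add: upZ_def split: nat.split)
  have e2: "(\<lambda>a. map (\<lambda>N. sub N (\<lambda>i. Var (f i)) (upZ z') (\<lambda>_. [])) (upT t a)) =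
      upT (\<lambda>a. map (\<lambda>N. sub N (\<lambda>i. Var (f i)) z' (\<lambda>_. [])) (t a))"
    by (rule ext) (simp add: upT_def k split: nat.split)
  show ?case using Mu[of "\<lambda>i. liftN 0 (s i)" "upZ z" "upT t" f "upZ z'"] by (simp add: e1 e2 k)
qed (auto simp: sub_apps)

lemma ren_sub_Var:
  "sub (sub M s z t) Var z' (\<lambda>_. []) =
     sub M (\<lambda>i. sub (s i) Var z' (\<lambda>_. [])) (\<lambda>a. z' (z a)) (\<lambda>a. map (\<lambda>N. sub N Var z' (\<lambda>_. [])) (t a))"
  using ren_sub(1)[where f="\<lambda>i. i"] by simp

lemma LVS: "sub (liftV 0 X) (upV s) z (\<lambda>a. map (liftV 0) (t a)) = liftV 0 (sub X s z t)"
proof -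
  have "sub (liftV 0 X) (upV s) z (\<lambda>a. map (liftV 0) (t a)) = sub X (\<lambda>i. liftV 0 (s i)) z (\<lambda>a. map (liftV 0) (t a))"
    by (simp add: liftV0_sub sub_ren upV_def)
  also have "\<dots> = liftV 0 (sub X s z t)"
    by (simp add: liftV0_fun ren_sub)
  finally show ?thesis .
qed

lemma LNS': "sub X (\<lambda>i. liftN 0 (s i)) (\<lambda>a. Suc (z a)) (\<lambda>a. map (liftN 0) (t a)) = liftN 0 (sub X s z t)"
  by (simp add: liftN0_fun ren_sub_Var)
lemma LVS': "sub X (\<lambda>i. liftV 0 (s i)) z (\<lambda>a. map (liftV 0) (t a)) = liftV 0 (sub X s z t)"
  by (simp add: liftV0_fun ren_sub)

lemma LNS: "sub (liftN 0 X) (\<lambda>i. liftN 0 (s i)) (upZ z) (upT t) = liftN 0 (sub X s z t)"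
proof -
  have "sub (liftN 0 X) (\<lambda>i. liftN 0 (s i)) (upZ z) (upT t) = sub X (\<lambda>i. liftN 0 (s i)) (\<lambda>a. Suc (z a)) (\<lambda>a. map (liftN 0) (t a))"
    by (simp add: liftN0_sub sub_ren_Var upZ_def upT_def)
  also have "\<dots> = liftN 0 (sub X s z t)"
    by (simp add: liftN0_fun ren_sub_Var)
  finally show ?thesis .
qed

lemma comp:
  "sub (sub M s z t) s' z' t' =
     sub M (\<lambda>i. sub (s i) s' z' t') (\<lambda>a. z' (z a)) (\<lambda>a. map (\<lambda>N. sub N s' z' t') (t a) @ t' (z a))"
  "subc (subc C s z t) s' z' t' =
     subc C (\<lambda>i. sub (s i) s' z' t') (\<lambda>a. z' (z a)) (\<lambda>a. map (\<lambda>N. sub N s' z' t') (t a) @ t' (z a))"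
proof (induction M and C arbitrary: s z t s' z' t' and s z t s' z' t')
  case (Lam M)
  have e1: "(\<lambda>i. sub (upV s i) (upV s') z' (\<lambda>a. map (liftV 0) (t' a))) = upV (\<lambda>i. sub (s i) s' z' t')"
    by (rule ext) (simp add: upV_def LVS split: nat.split)
  have e2: "(\<lambda>a. map (\<lambda>N. sub N (upV s') z' (\<lambda>a. map (liftV 0) (t' a))) (map (liftV 0) (t a)) @ map (liftV 0) (t' (z a)))
     = (\<lambda>a. map (liftV 0) (map (\<lambda>N. sub N s' z' t') (t a) @ t' (z a)))"
    by (simp add: LVS o_def)
  show ?case using Lam[of "upV s" z "\<lambda>a. map (liftV 0) (t a)" "upV s'" z' "\<lambda>a. map (liftV 0) (t' a)"]
    by (simp add: e1 e2 del: map_map)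
next
  case (Mu C)
  have e1: "(\<lambda>i. sub (liftN 0 (s i)) (\<lambda>i. liftN 0 (s' i)) (upZ z') (upT t')) = (\<lambda>i. liftN 0 (sub (s i) s' z' t'))"
    by (simp add: LNS)
  have e2: "(\<lambda>a. upZ z' (upZ z a)) = upZ (\<lambda>a. z' (z a))"
    by (rule ext) (simp add: upZ_def split: nat.split)
  have e3: "(\<lambda>a. map (\<lambda>N. sub N (\<lambda>i. liftN 0 (s' i)) (upZ z') (upT t')) (upT t a) @ upT t' (upZ z a))
     = upT (\<lambda>a. map (\<lambda>N. sub N s' z' t') (t a) @ t' (z a))"
    by (rule ext) (simp add: upT_def upZ_def LNS split: nat.split)
  show ?case using Mu[of "\<lambda>i. liftN 0 (s i)" "upZ z" "upT t" "\<lambda>i. liftN 0 (s' i)" "upZ z'" "upT t'"]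
    by (simp add: e1 e2 e3)
qed (auto simp: sub_apps)

lemma sub_liftV0[simp]: "sub (liftV 0 X) s z t = sub X (\<lambda>i. s (Suc i)) z t"
  by (simp add: liftV0_sub sub_ren)
lemma sub_liftN0[simp]: "sub (liftN 0 X) s z t = sub X s (\<lambda>a. z (Suc a)) (\<lambda>a. t (Suc a))"
  by (simp add: liftN0_sub sub_ren_Var)

lemma SV: "substV M k N = sub M (\<lambda>i. if i < k then Var i else if i = k then N else Var (i - 1)) id (\<lambda>_. [])"
  "substVc C k N = subc C (\<lambda>i. if i < k then Var i else if i = k then N else Var (i - 1)) id (\<lambda>_. [])"
proof (induction M and C arbitrary: k N and k N)
  case (Lam M)
  have "upV (\<lambda>i. if i < k then Var i else if i = k then N else Var (i - 1)) =
        (\<lambda>i. if i < Suc k then Var i else if i = Suc k then liftV 0 N else Var (i - 1))"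
    by (rule ext) (auto simp: upV_def split: nat.split)
  then show ?case using Lam by simp
next
  case (Mu C)
  have "(\<lambda>i. liftN 0 (if i < k then Var i else if i = k then N else Var (i - 1))) =
        (\<lambda>i. if i < k then Var i else if i = k then liftN 0 N else Var (i - 1))"
    by (rule ext) auto
  then show ?case using Mu by simp
qed auto

lemma SS: "sstruct M k L = sub M Var id (\<lambda>a. if a = k then [L] else [])"
  "sstructc C k L = subc C Var id (\<lambda>a. if a = k then [L] else [])"
proof (induction M and C arbitrary: k L and k L)
  case (Lam M)
  have "(\<lambda>a. map (liftV 0) (if a = k then [L] else [])) = (\<lambda>a. if a = k then [liftV 0 L] else [])"
    by (rule ext) auto
  then show ?case using Lam by simp
next
  case (Mu C)
  have "upT (\<lambda>a. if a = k then [L] else []) = (\<lambda>a. if a = Suc k then [liftN 0 L] else [])"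
    by (rule ext) (auto simp: upT_def split: nat.split)
  then show ?case using Mu by simp
qed auto

definition cons0 :: "trm \<Rightarrow> (nat \<Rightarrow> trm) \<Rightarrow> nat \<Rightarrow> trm" where
  "cons0 N s i = (case i of 0 \<Rightarrow> N | Suc j \<Rightarrow> s j)"

lemma BETA_SUB: "substV (sub M (upV s) z (\<lambda>a. map (liftV 0) (t a))) 0 N = sub M (cons0 N s) z t"
proof -
  have e: "(\<lambda>i. sub (upV s i) (\<lambda>i. if i = 0 then N else Var (i - 1)) id (\<lambda>_. [])) = cons0 N s"
    by (rule ext) (simp add: upV_def cons0_def sub_id split: nat.split)
  show ?thesis by (simp add: SV comp e o_def sub_id)
qed

lemma SUBBETA: "sub (substV M 0 N) s z t = substV (sub M (upV s) z (\<lambda>a. map (liftV 0) (t a))) 0 (sub N s z t)"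
proof -
  have e: "(\<lambda>i. sub (if i = 0 then N else Var (i - 1)) s z t) = cons0 (sub N s z t) s"
    by (rule ext) (simp add: cons0_def split: nat.split)
  show ?thesis by (simp add: BETA_SUB[symmetric] SV comp e)
qed

definition stS :: "trm list \<Rightarrow> nat \<Rightarrow> trm list" where
  "stS S a = (if a = 0 then map (liftN 0) S else [])"

lemma SUBMU: "sub (Mu (sstructc C 0 (liftN 0 N))) s z t =
   Mu (sstructc (subc C (\<lambda>i. liftN 0 (s i)) (upZ z) (upT t)) 0 (liftN 0 (sub N s z t)))"
proof -
  have e1: "(\<lambda>i. sub (liftN 0 (s i)) Var id (\<lambda>a. if a = 0 then [liftN 0 (sub N s z t)] else [])) = (\<lambda>i. liftN 0 (s i))"
    by (rule ext) (simp add: liftN0_sub sub_ren_Var)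
  have e2: "(\<lambda>a. map (\<lambda>X. sub X (\<lambda>i. liftN 0 (s i)) (upZ z) (upT t)) (if a = 0 then [liftN 0 N] else []) @ upT t a)
     = (\<lambda>a. map (\<lambda>X. sub X Var id (\<lambda>a. if a = 0 then [liftN 0 (sub N s z t)] else [])) (upT t a) @
          (if upZ z a = 0 then [liftN 0 (sub N s z t)] else []))"
    apply (rule ext)
    apply (simp add: upT_def upZ_def o_def LNS' split: nat.split)
    apply (simp add: liftN0_sub)
    done
  show ?thesis
    by (simp add: SS comp e1 e2 del: sub_liftN0)
qed

lemma red_apps: "red M M' \<Longrightarrow> red (apps M S) (apps M' S)"
  by (induction S arbitrary: M M') (auto intro: red_redc.intros)

lemma RS: "red M M' \<Longrightarrow> red (sub M s z t) (sub M' s z t)"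
  "redc C C' \<Longrightarrow> redc (subc C s z t) (subc C' s z t)"
proof (induction arbitrary: s z t and s z t rule: red_redc.inducts)
  case (beta M N)
  show ?case unfolding SUBBETA by (simp add: red_redc.beta)
next
  case (mu C N)
  show ?case unfolding SUBMU by (simp add: red_redc.mu)
next
  case (named M M' a)
  then show ?case by (simp add: red_redc.named red_apps)
qed (auto intro: red_redc.intros)

section \<open>Strong normalisation\<close>

inductive sn :: "trm \<Rightarrow> bool" where
  sn_intro: "(\<And>y. red x y \<Longrightarrow> sn y) \<Longrightarrow> sn x"

lemma sn_SN: "sn M \<Longrightarrow> SN M"
proof -
  have "sn x \<Longrightarrow> \<forall>f. f 0 = x \<longrightarrow> \<not> (\<forall>i. red (f i) (f (Suc i)))" for x
  proof (induction rule: sn.induct)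
    case (sn_intro x)
    show ?case
    proof (intro allI impI notI)
      fix f assume f0: "f 0 = x" and ch: "\<forall>i. red (f i) (f (Suc i))"
      have "red x (f 1)" using ch f0 by (metis One_nat_def)
      then have "\<forall>g. g 0 = f 1 \<longrightarrow> \<not> (\<forall>i. red (g i) (g (Suc i)))" using sn_intro.IH by blast
      from this[rule_format, of "\<lambda>i. f (Suc i)"] have "\<not> (\<forall>i. red (f (Suc i)) (f (Suc (Suc i))))" by simp
      then show False using ch by blast
    qed
  qed
  then show "sn M \<Longrightarrow> SN M" unfolding SN_def by blast
qed

lemma SN_sn: "SN M \<Longrightarrow> sn M"
proof (rule ccontr)
  assume S: "SN M" and n: "\<not> sn M"
  have step: "\<not> sn x \<Longrightarrow> \<exists>y. red x y \<and> \<not> sn y" for x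
    using sn_intro by blast
  define f where "f = rec_nat M (\<lambda>_ x. SOME y. red x y \<and> \<not> sn y)"
  have f0: "f 0 = M" by (simp add: f_def)
  have fS: "f (Suc i) = (SOME y. red (f i) y \<and> \<not> sn y)" for i by (simp add: f_def)
  have ns: "\<not> sn (f i)" for i
  proof (induction i)
    case 0 then show ?case using n f0 by simp
  next
    case (Suc i)
    then show ?case unfolding fS using someI_ex[OF step[OF Suc]] by blast
  qed
  have "red (f i) (f (Suc i))" for i
    unfolding fS using someI_ex[OF step[OF ns[of i]]] by blast
  then show False using S f0 unfolding SN_def by blast
qed

lemma sn_red: "sn M \<Longrightarrow> red M M' \<Longrightarrow> sn M'"
  by (auto elim: sn.cases)

lemma sn_reds: "red\<^sup>*\<^sup>* M M' \<Longrightarrow> sn M \<Longrightarrow> sn M'"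
  by (induction rule: rtranclp_induct) (auto intro: sn_red)

lemma sn_plus_induct[consumes 1, case_names step]:
  assumes "sn x" and step: "\<And>x. sn x \<Longrightarrow> (\<And>y. red\<^sup>+\<^sup>+ x y \<Longrightarrow> P y) \<Longrightarrow> P x"
  shows "P x"
proof -
  have "(\<forall>y. red\<^sup>+\<^sup>+ x y \<longrightarrow> P y) \<and> P x" using assms(1)
  proof (induction rule: sn.induct)
    case (sn_intro x)
    have A: "\<forall>y. red\<^sup>+\<^sup>+ x y \<longrightarrow> P y"
    proof (intro allI impI)
      fix y assume "red\<^sup>+\<^sup>+ x y"
      then obtain w where w: "red x w" "red\<^sup>*\<^sup>* w y" using tranclpD by metis
      then have "w = y \<or> red\<^sup>+\<^sup>+ w y" by (metis rtranclpD)
      then show "P y" using sn_intro.IH w(1) by blast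
    qed
    moreover have "sn x" using sn_intro.hyps by (rule sn.sn_intro)
    ultimately show ?case using step by blast
  qed
  then show ?thesis by blast
qed

inductive_cases redVarE: "red (Var x) Y"
inductive_cases redLamE: "red (Lam M) Y"
inductive_cases redAppE: "red (App M N) Y"
inductive_cases redMuE: "red (Mu C) Y"
inductive_cases redcNamedE: "redc (Named a M) C'"

lemma red_App_cases: "red (App M N) Y \<Longrightarrow>
   (\<exists>P. M = Lam P \<and> Y = substV P 0 N) \<or> (\<exists>C. M = Mu C \<and> Y = Mu (sstructc C 0 (liftN 0 N))) \<or>
   (\<exists>M'. red M M' \<and> Y = App M' N) \<or> (\<exists>N'. red N N' \<and> Y = App M N')"
  by (erule redAppE) auto
lemma red_Lam_cases: "red (Lam M) Y \<Longrightarrow> \<exists>M'. red M M' \<and> Y = Lam M'"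
  by (erule redLamE) auto
lemma red_Mu_cases: "red (Mu C) Y \<Longrightarrow> \<exists>C'. redc C C' \<and> Y = Mu C'"
  by (erule redMuE) auto
lemma redc_Named_cases: "redc (Named a M) C' \<Longrightarrow> \<exists>M'. red M M' \<and> C' = Named a M'"
  by (erule redcNamedE) auto
lemma red_Var_cases: "\<not> red (Var x) Y"
  by (auto elim: redVarE)

lemma sn_App: "sn (App M N) \<Longrightarrow> sn M \<and> sn N"
proof -
  have "sn X \<Longrightarrow> \<forall>M N. X = App M N \<longrightarrow> sn M \<and> sn N" for X
  proof (induction rule: sn.induct)
    case (sn_intro X)
    show ?case
    proof (intro allI impI conjI)
      fix M N assume X: "X = App M N"
      show "sn M"
      proof (rule sn.sn_intro)
        fix y assume "red M y"
        then have "red X (App y N)" using X by (simp add: red_redc.appL)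
        then show "sn y" using sn_intro.IH by blast
      qed
      show "sn N"
      proof (rule sn.sn_intro)
        fix y assume "red N y"
        then have "red X (App M y)" using X by (simp add: red_redc.appR)
        then show "sn y" using sn_intro.IH by blast
      qed
    qed
  qed
  then show "sn (App M N) \<Longrightarrow> sn M \<and> sn N" by blast
qed

lemma sn_apps: "sn (apps M S) \<Longrightarrow> sn M \<and> (\<forall>N\<in>set S. sn N)"
proof (induction S arbitrary: M)
  case Nil then show ?case by simp
next
  case (Cons N S)
  from Cons.prems have "sn (apps (App M N) S)" by simp
  from Cons.IH[OF this] have h: "sn (App M N)" "\<forall>x\<in>set S. sn x" by auto
  from sn_App[OF h(1)] h(2) show ?case by simp
qed

lemma apps_snoc: "apps M (S @ [N]) = App (apps M S) N" by simp

lemma apps_Lam: "apps M S = Lam P \<Longrightarrow> S = [] \<and> M = Lam P"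
  by (cases S rule: rev_cases) simp_all
lemma apps_Mu: "apps M S = Mu C \<Longrightarrow> S = [] \<and> M = Mu C"
  by (cases S rule: rev_cases) simp_all

lemma red_apps_Var: "red (apps (Var x) S) Y \<Longrightarrow> \<exists>S'. Y = apps (Var x) S'"
proof (induction S arbitrary: Y rule: rev_induct)
  case Nil then show ?case by (auto elim: redVarE)
next
  case (snoc N S)
  from red_App_cases[OF snoc.prems[unfolded apps_snoc]] show ?case
  proof (elim disjE exE conjE)
    fix P assume "apps (Var x) S = Lam P" then show ?thesis using apps_Lam[of "Var x" S] by simp
  next
    fix C assume "apps (Var x) S = Mu C" then show ?thesis using apps_Mu[of "Var x" S] by simp
  next
    fix M' assume "red (apps (Var x) S) M'" "Y = App M' N"
    moreover obtain S' where "M' = apps (Var x) S'" using snoc.IH calculation(1) by blast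
    ultimately show ?thesis by (metis apps_snoc)
  next
    fix N' assume "Y = App (apps (Var x) S) N'"
    then show ?thesis by (metis apps_snoc)
  qed
qed

lemma sn_App_neutral: "sn Q \<Longrightarrow> \<forall>N. sn N \<longrightarrow> (\<exists>S. Q = apps (Var x) S) \<longrightarrow> sn (App Q N)"
proof (induction Q rule: sn.induct)
  case (sn_intro Q)
  note outer = sn_intro.IH
  have "sn N \<Longrightarrow> (\<exists>S. Q = apps (Var x) S) \<Longrightarrow> sn (App Q N)" for N
  proof (induction N rule: sn.induct)
    case (sn_intro N)
    show ?case
    proof (rule sn.sn_intro)
      fix Y assume "red (App Q N) Y"
      from red_App_cases[OF this] show "sn Y"
      proof (elim disjE exE conjE)
        fix P assume "Q = Lam P" then show ?thesis using sn_intro.prems by (auto dest!: apps_Lam[OF sym])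
      next
        fix C assume "Q = Mu C" then show ?thesis using sn_intro.prems by (auto dest!: apps_Mu[OF sym])
      next
        fix Q' assume r: "red Q Q'" and Y: "Y = App Q' N"
        have "\<exists>S. Q' = apps (Var x) S" using sn_intro.prems r red_apps_Var by blast
        moreover have "sn N" using sn_intro.hyps by (rule sn.sn_intro)
        ultimately show ?thesis using outer[OF r] Y by blast
      next
        fix N' assume "red N N'" "Y = App Q N'"
        then show ?thesis using sn_intro.IH sn_intro.prems by blast
      qed
    qed
  qed
  then show ?case by blast
qed

lemma sn_Var_apps: "\<forall>N\<in>set S. sn N \<Longrightarrow> sn (apps (Var x) S)"
proof (induction S rule: rev_induct)
  case Nil then show ?case by (auto intro: sn.sn_intro elim: redVarE)
next
  case (snoc N S)
  then show ?case unfolding apps_snoc using sn_App_neutral by auto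
qed

lemma sn_Var[simp]: "sn (Var x)"
  using sn_Var_apps[of "[]"] by simp

inductive stepl :: "trm list \<Rightarrow> trm list \<Rightarrow> bool" where
  sl_head: "red N N' \<Longrightarrow> stepl (N # S) (N' # S)"
| sl_tail: "stepl S S' \<Longrightarrow> stepl (N # S) (N # S')"

lemma stepl_snoc1: "stepl S S' \<Longrightarrow> stepl (S @ [N]) (S' @ [N])"
  by (induction rule: stepl.induct) (auto intro: stepl.intros)
lemma stepl_snoc2: "red N N' \<Longrightarrow> stepl (S @ [N]) (S @ [N'])"
  by (induction S) (auto intro: stepl.intros)
lemma stepl_red: "stepl S S' \<Longrightarrow> red (apps M S) (apps M S')"
  by (induction arbitrary: M rule: stepl.induct) (auto intro: red_apps red_redc.appR)
lemma stepl_sn: "stepl S S' \<Longrightarrow> \<forall>x\<in>set S. sn x \<Longrightarrow> \<forall>x\<in>set S'. sn x"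
  by (induction rule: stepl.induct) (auto intro: sn_red)
lemma stepl_length: "stepl S S' \<Longrightarrow> length S' = length S"
  by (induction rule: stepl.induct) auto
lemma stepl_rs: "stepl S S' \<Longrightarrow> list_all2 red\<^sup>*\<^sup>* S S'"
  by (induction rule: stepl.induct) (auto simp: list_all2_refl)

lemma red_apps_head: "red (apps X S) Y \<Longrightarrow> (\<forall>P. X \<noteq> Lam P) \<Longrightarrow> (\<forall>C. X \<noteq> Mu C) \<Longrightarrow>
   (\<exists>X'. red X X' \<and> Y = apps X' S) \<or> (\<exists>S'. stepl S S' \<and> Y = apps X S')"
proof (induction S arbitrary: Y rule: rev_induct)
  case Nil then show ?case by simp
next
  case (snoc N S)
  from red_App_cases[OF snoc.prems(1)[unfolded apps_snoc]] show ?case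
  proof (elim disjE exE conjE)
    fix P assume "apps X S = Lam P" then show ?thesis using apps_Lam[of X S] snoc.prems by simp
  next
    fix C assume "apps X S = Mu C" then show ?thesis using apps_Mu[of X S] snoc.prems by simp
  next
    fix M' assume r: "red (apps X S) M'" and Y: "Y = App M' N"
    from snoc.IH[OF r snoc.prems(2,3)] show ?thesis
    proof (elim disjE exE conjE)
      fix X' assume "red X X'" "M' = apps X' S"
      moreover have "Y = apps X' (S @ [N])" using Y calculation(2) by simp
      ultimately show ?thesis by blast
    next
      fix S' assume "stepl S S'" "M' = apps X S'" then show ?thesis using Y stepl_snoc1 by fastforce
    qed
  next
    fix N' assume "red N N'" "Y = App (apps X S) N'"
    then show ?thesis using stepl_snoc2 by fastforce
  qed
qed

lemma rtranclp_map: "(\<And>x y. R x y \<Longrightarrow> R' (f x) (f y)) \<Longrightarrow> R\<^sup>*\<^sup>* x y \<Longrightarrow> R'\<^sup>*\<^sup>* (f x) (f y)"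
proof -
  assume h: "\<And>x y. R x y \<Longrightarrow> R' (f x) (f y)"
  show "R\<^sup>*\<^sup>* x y \<Longrightarrow> R'\<^sup>*\<^sup>* (f x) (f y)"
    by (induction rule: rtranclp_induct) (auto intro: rtranclp.rtrancl_into_rtrancl h)
qed

lemma rs_App: "red\<^sup>*\<^sup>* M M' \<Longrightarrow> red\<^sup>*\<^sup>* N N' \<Longrightarrow> red\<^sup>*\<^sup>* (App M N) (App M' N')"
proof -
  assume a: "red\<^sup>*\<^sup>* M M'" and b: "red\<^sup>*\<^sup>* N N'"
  have "red\<^sup>*\<^sup>* (App M N) (App M' N)"
    using rtranclp_map[of red red "\<lambda>x. App x N", OF _ a] by (auto intro: red_redc.appL)
  moreover have "red\<^sup>*\<^sup>* (App M' N) (App M' N')"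
    using rtranclp_map[of red red "\<lambda>x. App M' x", OF _ b] by (auto intro: red_redc.appR)
  ultimately show ?thesis by simp
qed
lemma rs_Lam: "red\<^sup>*\<^sup>* M M' \<Longrightarrow> red\<^sup>*\<^sup>* (Lam M) (Lam M')"
  using rtranclp_map[of red red Lam] by (auto intro: red_redc.lam)
lemma rs_Mu: "redc\<^sup>*\<^sup>* C C' \<Longrightarrow> red\<^sup>*\<^sup>* (Mu C) (Mu C')"
  using rtranclp_map[of redc red Mu] by (auto intro: red_redc.muC)
lemma rs_Named: "red\<^sup>*\<^sup>* M M' \<Longrightarrow> redc\<^sup>*\<^sup>* (Named a M) (Named a M')"
  using rtranclp_map[of red redc "Named a"] by (auto intro: red_redc.named)
lemma rs_apps: "list_all2 red\<^sup>*\<^sup>* S S' \<Longrightarrow> red\<^sup>*\<^sup>* P P' \<Longrightarrow> red\<^sup>*\<^sup>* (apps P S) (apps P' S')"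
proof (induction S S' arbitrary: P P' rule: list_all2_induct)
  case Nil then show ?case by simp
next
  case (Cons x xs y ys)
  then show ?case using rs_App by simp
qed
lemma rs_sub: "red\<^sup>*\<^sup>* M M' \<Longrightarrow> red\<^sup>*\<^sup>* (sub M s z t) (sub M' s z t)"
  using rtranclp_map[of red red "\<lambda>x. sub x s z t"] RS(1) by blast
lemma rs_liftV0: "red\<^sup>*\<^sup>* M M' \<Longrightarrow> red\<^sup>*\<^sup>* (liftV 0 M) (liftV 0 M')"
  unfolding liftV0_sub by (rule rs_sub)
lemma rs_liftN0: "red\<^sup>*\<^sup>* M M' \<Longrightarrow> red\<^sup>*\<^sup>* (liftN 0 M) (liftN 0 M')"
  unfolding liftN0_sub by (rule rs_sub)

lemma SUBRED:
  "(\<forall>i. red\<^sup>*\<^sup>* (s i) (s' i)) \<Longrightarrow> (\<forall>a. list_all2 red\<^sup>*\<^sup>* (t a) (t' a)) \<Longrightarrow> red\<^sup>*\<^sup>* (sub M s z t) (sub M s' z t')"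
  "(\<forall>i. red\<^sup>*\<^sup>* (s i) (s' i)) \<Longrightarrow> (\<forall>a. list_all2 red\<^sup>*\<^sup>* (t a) (t' a)) \<Longrightarrow> redc\<^sup>*\<^sup>* (subc C s z t) (subc C s' z t')"
proof (induction M and C arbitrary: s s' z t t' and s s' z t t')
  case (Lam M)
  have "\<forall>i. red\<^sup>*\<^sup>* (upV s i) (upV s' i)"
    using Lam.prems(1) by (auto simp: upV_def rs_liftV0 split: nat.split)
  moreover have "\<forall>a. list_all2 red\<^sup>*\<^sup>* (map (liftV 0) (t a)) (map (liftV 0) (t' a))"
    using Lam.prems(2) by (auto simp: list_all2_map1 list_all2_map2 intro: list_all2_mono rs_liftV0)
  ultimately show ?case using Lam.IH by (simp add: rs_Lam)
next
  case (App M N)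
  then show ?case by (simp add: rs_App)
next
  case (Mu C)
  have "\<forall>i. red\<^sup>*\<^sup>* (liftN 0 (s i)) (liftN 0 (s' i))"
    using Mu.prems(1) by (auto simp: rs_liftN0)
  moreover have "\<forall>a. list_all2 red\<^sup>*\<^sup>* (upT t a) (upT t' a)"
    using Mu.prems(2) by (auto simp: upT_def list_all2_map1 list_all2_map2 intro: list_all2_mono rs_liftN0 split: nat.split)
  ultimately show ?case using Mu.IH by (simp add: rs_Mu)
next
  case (Named a M)
  then show ?case by (simp add: rs_Named rs_apps)
qed simp

lemma MU_COMP2: "subc (sstructc C 0 (liftN 0 N)) Var id (stS S') = subc C Var id (stS (N # S'))"
proof -
  have e: "(\<lambda>a. map (\<lambda>X. sub X Var id (stS S')) (if a = 0 then [liftN 0 N] else []) @ stS S' a) = stS (N # S')"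
    by (rule ext) (simp add: stS_def flip: liftN0_sub)
  show ?thesis by (simp add: SS comp e, simp add: id_def)
qed

lemma stS_nil[simp]: "stS [] = (\<lambda>_. [])"
  by (rule ext) (simp add: stS_def)

lemma beta_sat: "sn N \<Longrightarrow> sn (apps (substV M 0 N) S) \<Longrightarrow> sn (apps (App (Lam M) N) S)"
proof -
  define W where "W M N S = App (App (Var 0) (apps (substV M 0 N) S)) N" for M N S
  have key: "sn Q \<Longrightarrow> \<forall>M N S. Q = W M N S \<longrightarrow> sn (apps (App (Lam M) N) S)" for Q
  proof (induction Q rule: sn_plus_induct)
    case (step Q)
    show ?case
    proof (intro allI impI)
      fix M N S assume Q: "Q = W M N S"
      have snA: "sn (apps (substV M 0 N) S)" and snN: "sn N"
        using step.hyps Q unfolding W_def by (auto dest: sn_App)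
      show "sn (apps (App (Lam M) N) S)"
      proof (rule sn.sn_intro)
        fix Y assume rY: "red (apps (App (Lam M) N) S) Y"
        have "(\<exists>X'. red (App (Lam M) N) X' \<and> Y = apps X' S) \<or> (\<exists>S'. stepl S S' \<and> Y = apps (App (Lam M) N) S')"
          using red_apps_head[OF rY] by simp
        then show "sn Y"
        proof (elim disjE exE conjE)
          fix X' assume rX: "red (App (Lam M) N) X'" and Y: "Y = apps X' S"
          from red_App_cases[OF rX] show ?thesis
          proof (elim disjE exE conjE)
            fix P assume "Lam M = Lam P" "X' = substV P 0 N"
            then show ?thesis using snA Y by simp
          next
            fix C assume "Lam M = Mu C" then show ?thesis by simp
          next
            fix L assume "red (Lam M) L" "X' = App L N"
            moreover obtain M' where "red M M'" "L = Lam M'" using red_Lam_cases calculation(1) by blast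
            moreover have "red (substV M 0 N) (substV M' 0 N)"
              unfolding SV using RS(1) calculation(3) by blast
            then have "red Q (W M' N S)" unfolding Q W_def
              by (intro red_redc.appL red_redc.appR red_apps)
            ultimately show ?thesis using step.IH Y by blast
          next
            fix N' assume rN: "red N N'" and X': "X' = App (Lam M) N'"
            have "red\<^sup>*\<^sup>* (substV M 0 N) (substV M 0 N')"
              unfolding SV using rN by (intro SUBRED) auto
            then have "red\<^sup>*\<^sup>* (apps (substV M 0 N) S) (apps (substV M 0 N') S)"
              by (intro rs_apps) (auto simp: list_all2_refl)
            then have "red\<^sup>*\<^sup>* Q (App (App (Var 0) (apps (substV M 0 N') S)) N)"
              unfolding Q W_def by (intro rs_App) auto
            moreover have "red (App (App (Var 0) (apps (substV M 0 N') S)) N) (W M N' S)"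
              unfolding W_def using rN by (rule red_redc.appR)
            ultimately have "red\<^sup>+\<^sup>+ Q (W M N' S)" by (rule rtranclp_into_tranclp1)
            then show ?thesis using step.IH X' Y by blast
          qed
        next
          fix S' assume "stepl S S'" "Y = apps (App (Lam M) N) S'"
          moreover have "red Q (W M N S')" unfolding Q W_def
            using calculation(1) by (intro red_redc.appL red_redc.appR stepl_red)
          ultimately show ?thesis using step.IH by blast
        qed
      qed
    qed
  qed
  assume "sn N" "sn (apps (substV M 0 N) S)"
  then have "sn (W M N S)" unfolding W_def using sn_Var_apps[of "[apps (substV M 0 N) S, N]" 0] by simp
  then show ?thesis using key by blast
qed

lemma stS_rs: "red\<^sup>*\<^sup>* N N' \<Longrightarrow> list_all2 red\<^sup>*\<^sup>* S S' \<Longrightarrow> list_all2 red\<^sup>*\<^sup>* (stS (N # S) a) (stS (N' # S') a)"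
  by (auto simp: stS_def list_all2_map1 list_all2_map2 intro: list_all2_mono rs_liftN0)

lemma mu_sat: "\<forall>x\<in>set S. sn x \<Longrightarrow> sn (Mu (subc C Var id (stS S))) \<Longrightarrow> sn (apps (Mu C) S)"
proof (induction "length S" arbitrary: S C rule: less_induct)
  case less
  show ?case
  proof (cases S)
    case Nil then show ?thesis using less.prems by (simp add: sub_id)
  next
    case (Cons N0 S0)
    define W where "W C N S' = apps (Var 0) (Mu (subc C Var id (stS (N # S'))) # N # S')" for C N S'
    have key: "sn Q \<Longrightarrow> \<forall>C N S'. Q = W C N S' \<longrightarrow> length S' < length S \<longrightarrow> sn (apps (Mu C) (N # S'))" for Q
    proof (induction Q rule: sn_plus_induct)
      case (step Q)
      show ?case
      proof (intro allI impI)
        fix C N S' assume Q: "Q = W C N S'" and len: "length S' < length S"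
        have "sn (apps (Var 0) (Mu (subc C Var id (stS (N # S'))) # N # S'))" using step.hyps by (simp only: Q W_def)
        then have "\<forall>x\<in>set (Mu (subc C Var id (stS (N # S'))) # N # S'). sn x" by (rule sn_apps[THEN conjunct2])
        then have snA: "sn (Mu (subc C Var id (stS (N # S'))))" and snN: "sn N" and snS: "\<forall>x\<in>set S'. sn x"
          by simp_all
        show "sn (apps (Mu C) (N # S'))"
        proof (rule sn.sn_intro)
          fix Y assume rY: "red (apps (Mu C) (N # S')) Y"
          have "(\<exists>X'. red (App (Mu C) N) X' \<and> Y = apps X' S') \<or> (\<exists>S''. stepl S' S'' \<and> Y = apps (App (Mu C) N) S'')"
            using red_apps_head[of "App (Mu C) N" S' Y] rY by simp
          then show "sn Y"
          proof (elim disjE exE conjE)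
            fix X' assume rX: "red (App (Mu C) N) X'" and Y: "Y = apps X' S'"
            from red_App_cases[OF rX] show ?thesis
            proof (elim disjE exE conjE)
              fix P assume "Mu C = Lam P" then show ?thesis by simp
            next
              fix C0 assume "Mu C = Mu C0" "X' = Mu (sstructc C0 0 (liftN 0 N))"
              then have Y': "Y = apps (Mu (sstructc C 0 (liftN 0 N))) S'" using Y by simp
              show ?thesis unfolding Y'
                by (rule less.hyps) (use len snS snA MU_COMP2 in auto)
            next
              fix L assume "red (Mu C) L" "X' = App L N"
              moreover obtain C' where "redc C C'" "L = Mu C'" using red_Mu_cases calculation(1) by blast
              moreover have "red (Mu (subc C Var id (stS (N # S')))) (Mu (subc C' Var id (stS (N # S'))))"
                using RS(2) calculation(3) by (blast intro: red_redc.muC)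
              then have "red Q (W C' N S')" unfolding Q W_def by (simp add: red_apps red_redc.appL red_redc.appR)
              ultimately show ?thesis using step.IH Y len by fastforce
            next
              fix N' assume rN: "red N N'" and X': "X' = App (Mu C) N'"
              have "red\<^sup>*\<^sup>* (Mu (subc C Var id (stS (N # S')))) (Mu (subc C Var id (stS (N' # S'))))"
                using rN by (intro rs_Mu SUBRED) (auto intro!: stS_rs simp: list_all2_refl)
              then have "red\<^sup>*\<^sup>* Q (apps (Var 0) (Mu (subc C Var id (stS (N' # S')))  # N # S'))"
                unfolding Q W_def by (intro rs_apps) (auto simp: list_all2_refl)
              moreover have "red (apps (Var 0) (Mu (subc C Var id (stS (N' # S')))  # N # S')) (W C N' S')"
                unfolding W_def using rN by (intro stepl_red sl_tail sl_head)
              ultimately have "red\<^sup>+\<^sup>+ Q (W C N' S')" by (rule rtranclp_into_tranclp1)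
              then show ?thesis using step.IH X' Y len by fastforce
            qed
          next
            fix S'' assume st: "stepl S' S''" and Y: "Y = apps (App (Mu C) N) S''"
            have "red\<^sup>*\<^sup>* (Mu (subc C Var id (stS (N # S')))) (Mu (subc C Var id (stS (N # S''))))"
            proof -
              have "\<forall>a. list_all2 red\<^sup>*\<^sup>* (stS (N # S') a) (stS (N # S'') a)"
                using stS_rs[OF _ stepl_rs[OF st]] by blast
              then show ?thesis by (intro rs_Mu SUBRED) auto
            qed
            then have "red\<^sup>*\<^sup>* Q (apps (Var 0) (Mu (subc C Var id (stS (N # S''))) # N # S'))"
              unfolding Q W_def by (intro rs_apps) (auto simp: list_all2_refl)
            moreover have "red (apps (Var 0) (Mu (subc C Var id (stS (N # S''))) # N # S')) (W C N S'')"
              unfolding W_def using st by (intro stepl_red sl_tail)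
            ultimately have "red\<^sup>+\<^sup>+ Q (W C N S'')" by (rule rtranclp_into_tranclp1)
            moreover have "length S'' < length S" using st len stepl_length by simp
            ultimately show ?thesis using step.IH Y by simp
          qed
        qed
      qed
    qed
    have "sn (W C N0 S0)" unfolding W_def using less.prems Cons by (intro sn_Var_apps) auto
    then show ?thesis using key Cons by simp
  qed
qed

lemma sn_Mu_Named: "sn P \<Longrightarrow> sn (Mu (Named b P))"
proof (induction P rule: sn.induct)
  case (sn_intro P)
  show ?case
  proof (rule sn.sn_intro)
    fix Y assume "red (Mu (Named b P)) Y"
    then obtain C' where "redc (Named b P) C'" "Y = Mu C'" using red_Mu_cases by blast
    moreover obtain P' where "red P P'" "C' = Named b P'" using redc_Named_cases calculation(1) by blast
    ultimately show "sn Y" using sn_intro.IH by blast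
  qed
qed

lemma sn_sub_refl: "sn (sub M s z t) \<Longrightarrow> sn M"
proof -
  have "sn X \<Longrightarrow> \<forall>M. X = sub M s z t \<longrightarrow> sn M" for X
  proof (induction rule: sn.induct)
    case (sn_intro X)
    show ?case
    proof (intro allI impI)
      fix M assume X: "X = sub M s z t"
      show "sn M"
      proof (rule sn.sn_intro)
        fix M' assume "red M M'"
        then have "red X (sub M' s z t)" using X RS(1) by blast
        then show "sn M'" using sn_intro.IH by blast
      qed
    qed
  qed
  then show "sn (sub M s z t) \<Longrightarrow> sn M" by blast
qed

lemma sub_ren_Lam: "sub M Var z (\<lambda>_. []) = Lam P \<Longrightarrow> \<exists>M0. M = Lam M0 \<and> P = sub M0 Var z (\<lambda>_. [])"
  by (cases M) auto
lemma sub_ren_Mu: "sub M Var z (\<lambda>_. []) = Mu C \<Longrightarrow> \<exists>C0. M = Mu C0 \<and> C = subc C0 Var (upZ z) (\<lambda>_. [])"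
  by (cases M) auto

lemma ren_back:
  "red (sub M Var z (\<lambda>_. [])) Y \<Longrightarrow> \<exists>M'. red M M' \<and> Y = sub M' Var z (\<lambda>_. [])"
  "redc (subc C Var z (\<lambda>_. [])) C' \<Longrightarrow> \<exists>C''. redc C C'' \<and> C' = subc C'' Var z (\<lambda>_. [])"
proof (induction M and C arbitrary: z Y and z C')
  case (Var x)
  then show ?case using red_Var_cases by simp
next
  case (Lam M)
  then obtain M' where "red (sub M Var z (\<lambda>_. [])) M'" "Y = Lam M'" using red_Lam_cases by fastforce
  moreover obtain M'' where "red M M''" "M' = sub M'' Var z (\<lambda>_. [])" using Lam.IH calculation(1) by blast
  ultimately show ?case by (intro exI[of _ "Lam M''"]) (simp add: red_redc.lam)
next
  case (App M N)
  from red_App_cases[OF App.prems[simplified]] show ?case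
  proof (elim disjE exE conjE)
    fix P assume "sub M Var z (\<lambda>_. []) = Lam P" and Y: "Y = substV P 0 (sub N Var z (\<lambda>_. []))"
    then obtain M0 where M: "M = Lam M0" "P = sub M0 Var z (\<lambda>_. [])" using sub_ren_Lam by blast
    have "Y = sub (substV M0 0 N) Var z (\<lambda>_. [])" unfolding Y M SUBBETA by simp
    then show ?thesis using M by (blast intro: red_redc.beta)
  next
    fix C assume "sub M Var z (\<lambda>_. []) = Mu C" and Y: "Y = Mu (sstructc C 0 (liftN 0 (sub N Var z (\<lambda>_. []))))"
    then obtain C0 where M: "M = Mu C0" "C = subc C0 Var (upZ z) (\<lambda>_. [])" using sub_ren_Mu by blast
    have "Y = sub (Mu (sstructc C0 0 (liftN 0 N))) Var z (\<lambda>_. [])" unfolding Y M SUBMU by simp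
    then show ?thesis using M by (blast intro: red_redc.mu)
  next
    fix M' assume "red (sub M Var z (\<lambda>_. [])) M'" "Y = App M' (sub N Var z (\<lambda>_. []))"
    then show ?thesis using App.IH(1) by (fastforce intro: red_redc.appL)
  next
    fix N' assume "red (sub N Var z (\<lambda>_. [])) N'" "Y = App (sub M Var z (\<lambda>_. [])) N'"
    then show ?thesis using App.IH(2) by (fastforce intro: red_redc.appR)
  qed
next
  case (Mu C)
  then obtain C' where "redc (subc C Var (upZ z) (\<lambda>_. [])) C'" "Y = Mu C'" using red_Mu_cases by fastforce
  moreover obtain C'' where "redc C C''" "C' = subc C'' Var (upZ z) (\<lambda>_. [])" using Mu.IH calculation(1) by blast
  ultimately show ?case by (intro exI[of _ "Mu C''"]) (simp add: red_redc.muC)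
next
  case (Named a M)
  then obtain M' where "red (sub M Var z (\<lambda>_. [])) M'" "C' = Named (z a) M'" using redc_Named_cases by fastforce
  then show ?case using Named.IH by (fastforce intro: red_redc.named)
qed

lemma sn_ren: "sn M \<Longrightarrow> sn (sub M Var z (\<lambda>_. []))"
proof (induction rule: sn.induct)
  case (sn_intro M)
  show ?case
  proof (rule sn.sn_intro)
    fix Y assume "red (sub M Var z (\<lambda>_. [])) Y"
    then obtain M' where "red M M'" "Y = sub M' Var z (\<lambda>_. [])" using ren_back(1) by blast
    then show "sn Y" using sn_intro.IH by blast
  qed
qed



section \<open>Semantics\<close>

definition L :: "trm list set" where "L = {S. \<forall>N\<in>set S. sn N}"
definition ren :: "(nat \<Rightarrow> nat) \<Rightarrow> trm \<Rightarrow> trm" where "ren z M = sub M Var z (\<lambda>_. [])"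
definition NS :: "trm set" where "NS = {M. \<forall>z S. S \<in> L \<longrightarrow> sn (apps (ren z M) S)}"

primrec sem :: "ty \<Rightarrow> trm set \<times> trm list set" where
  "sem (Psi a) = ((case a of Bot \<Rightarrow> UNIV | Top \<Rightarrow> NS), {})"
| "sem Om = (UNIV, L)"
| "sem (Meet a b) = (fst (sem a) \<inter> fst (sem b), snd (sem a) \<inter> snd (sem b))"
| "sem (Arr k r) = ({M. \<forall>z S. S \<in> snd (sem k) \<longrightarrow> apps (ren z M) S \<in> fst (sem r)}, {})"
| "sem (ty.Prod d k) = (UNIV, {N # S | N S. N \<in> fst (sem d) \<and> sn N \<and> S \<in> snd (sem k)} \<union>
      (if fst (sem d) = UNIV \<and> [] \<in> snd (sem k) then {[]} else {}))"

abbreviation T :: "ty \<Rightarrow> trm set" where "T t \<equiv> fst (sem t)"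
abbreviation K :: "ty \<Rightarrow> trm list set" where "K t \<equiv> snd (sem t)"

primrec cs :: "ty \<Rightarrow> (trm \<times> trm list) set" where
  "cs (Psi a) = UNIV"
| "cs Om = UNIV"
| "cs (Meet a b) = cs a \<inter> cs b"
| "cs (Arr k r) = UNIV"
| "cs (ty.Prod d k) = {(M, S). M \<in> T d \<and> (S \<in> L \<longrightarrow> S \<in> K k)}"

lemma ren_apps: "ren z (apps M S) = apps (ren z M) (map (ren z) S)"
  unfolding ren_def[abs_def] by (simp add: sub_apps)
lemma ren_ren: "ren z' (ren z M) = ren (\<lambda>a. z' (z a)) M"
  by (simp add: ren_def sub_ren_Var)
lemma ren_id[simp]: "ren id M = M" "ren (\<lambda>a. a) M = M"
  by (simp_all add: ren_def sub_id id_def[symmetric])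
lemma ren_Var[simp]: "ren z (Var x) = Var x"
  by (simp add: ren_def)
lemma ren_App[simp]: "ren z (App M N) = App (ren z M) (ren z N)"
  by (simp add: ren_def)
lemma L_ren: "S \<in> L \<Longrightarrow> map (ren z) S \<in> L"
  by (auto simp: L_def ren_def intro: sn_ren)
lemma L_append[simp]: "S @ S' \<in> L \<longleftrightarrow> S \<in> L \<and> S' \<in> L"
  by (auto simp: L_def)
lemma L_Cons[simp]: "N # S \<in> L \<longleftrightarrow> sn N \<and> S \<in> L"
  by (auto simp: L_def)
lemma L_Nil[simp]: "[] \<in> L"
  by (auto simp: L_def)
lemma liftN0_is_ren: "liftN 0 M = ren Suc M"
  by (simp add: ren_def liftN0_sub)

lemma K_L: "K t \<subseteq> L"
  by (induction t) auto

lemma K_append: "S \<in> K t \<Longrightarrow> S' \<in> L \<Longrightarrow> S @ S' \<in> K t"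
proof (induction t arbitrary: S S')
  case (Prod d k)
  show ?case
  proof (cases S)
    case Nil
    then have u: "T d = UNIV" and e: "[] \<in> K k" using Prod.prems(1) by (auto split: if_splits)
    show ?thesis
    proof (cases S')
      case Nil then show ?thesis using \<open>S = []\<close> Prod.prems by simp
    next
      case (Cons N S'')
      then have "S'' \<in> K k" using Prod.IH(2)[OF e, of S''] Prod.prems(2) by simp
      then show ?thesis using Cons \<open>S = []\<close> u Prod.prems(2) by auto
    qed
  next
    case (Cons N S0)
    then show ?thesis using Prod.prems Prod.IH(2)[of S0 S'] by (auto split: if_splits)
  qed
qed auto

lemma ren_closed: "(M \<in> T t \<longrightarrow> ren z M \<in> T t) \<and> (S \<in> K t \<longrightarrow> map (ren z) S \<in> K t)"
proof (induction t arbitrary: M S z)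
  case (Psi a)
  then show ?case by (cases a) (auto simp: NS_def ren_ren)
next
  case Om
  then show ?case by (auto intro: L_ren)
next
  case (Meet a b)
  then show ?case by auto
next
  case (Arr k r)
  then show ?case by (auto simp: ren_ren)
next
  case (Prod d k)
  have "map (ren z) S \<in> K (ty.Prod d k)" if "S \<in> K (ty.Prod d k)"
  proof (cases S)
    case Nil then show ?thesis using that by simp
  next
    case (Cons N S0)
    then have h: "N \<in> T d" "sn N" "S0 \<in> K k" using that by (auto split: if_splits)
    have "ren z N \<in> T d" using Prod.IH(1) h(1) by blast
    moreover have "sn (ren z N)" using h(2) unfolding ren_def by (rule sn_ren)
    moreover have "map (ren z) S0 \<in> K k" using Prod.IH(2) h(3) by blast
    ultimately show ?thesis using Cons by simp
  qed
  then show ?case by simp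
qed

lemma T_ren: "M \<in> T t \<Longrightarrow> ren z M \<in> T t" using ren_closed by blast
lemma K_ren: "S \<in> K t \<Longrightarrow> map (ren z) S \<in> K t" using ren_closed by blast

lemma leqR_sound: "leqR a b \<Longrightarrow> T a \<subseteq> T b"
proof (induction rule: leqR.induct)
  case (R_join1 a b) then show ?case by (cases a; cases b) auto
next
  case (R_join2 a b) then show ?case by (cases a; cases b) auto
qed auto

lemma NS_apps: assumes "M \<in> NS" "S \<in> L" shows "apps (ren z M) S \<in> NS"
  unfolding NS_def
proof (clarify)
  fix z' S' assume "S' \<in> L"
  then have "map (ren z') S @ S' \<in> L" using assms(2) L_ren by simp
  moreover have "\<forall>z S. S \<in> L \<longrightarrow> sn (apps (ren z M) S)" using assms(1) unfolding NS_def by blast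
  ultimately have "sn (apps (ren (\<lambda>a. z' (z a)) M) (map (ren z') S @ S'))" by blast
  then show "sn (apps (ren z' (apps (ren z M) S)) S')" by (simp add: ren_apps ren_ren)
qed

lemma leq_sound: "leqD a b \<Longrightarrow> T a \<subseteq> T b" "leqC a b \<Longrightarrow> K a \<subseteq> K b \<and> cs a \<subseteq> cs b"
proof (induction rule: leqD_leqC.inducts)
  case (D_R a b) then show ?case by (rule leqR_sound)
next
  case (D_psi1 a)
  then show ?case by (cases a) (auto intro: NS_apps)
next
  case (D_psi2 a)
  show ?case
  proof (cases a)
    case Top
    show ?thesis
    proof
      fix M assume "M \<in> T (Arr Om (Psi a))"
      then have "\<forall>z S. S \<in> L \<longrightarrow> apps (ren z M) S \<in> NS" using Top by simp
      then have "apps (ren id M) [] \<in> NS" using L_Nil by blast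
      then show "M \<in> T (Psi a)" using Top by simp
    qed
  qed simp
next
  case (D_arr k' k r r')
  then show ?case using leqR_sound[OF D_arr.hyps(2)] by auto
next
  case C_om
  show ?case
  proof
    show "K Om \<subseteq> K (ty.Prod Om Om)"
    proof
      fix S assume "S \<in> K Om"
      then show "S \<in> K (ty.Prod Om Om)" by (cases S) auto
    qed
  qed auto
next
  case (C_top a)
  then show ?case using K_L by auto
next
  case (C_prodmeet d1 d2 k1 k2)
  then show ?case by (auto split: if_splits)
next
  case (C_prod d d' k k')
  then show ?case by (auto split: if_splits)
qed auto

definition Omg :: trm where "Omg = App (Lam (App (Var 0) (Var 0))) (Lam (App (Var 0) (Var 0)))"

lemma not_sn_Omg: "\<not> sn Omg"
proof
  have r: "red Omg Omg" unfolding Omg_def using red_redc.beta[of "App (Var 0) (Var 0)" "Lam (App (Var 0) (Var 0))"] by simp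
  have "sn X \<Longrightarrow> X \<noteq> Omg" for X
    by (induction rule: sn.induct) (use r in blast)
  then show "sn Omg \<Longrightarrow> False" by blast
qed

inductive_cases rD_ArrE: "rD (Arr k r)"
inductive_cases rC_ArrE: "rC (Arr k r)"
inductive_cases rC_ProdE: "rC (ty.Prod d k)"
inductive_cases rD_ProdE: "rD (ty.Prod d k)"

lemma restr: "rD d \<Longrightarrow> (\<forall>x. Var x \<in> T d) \<and> (\<forall>M\<in>T d. sn M) \<and> Omg \<notin> T d"
  "rC k \<Longrightarrow> \<exists>n. \<forall>xs. n \<le> length xs \<longrightarrow> map Var xs \<in> K k"
proof (induction rule: rD_rC.inducts)
  case (1 k)
  then obtain n where n: "\<forall>xs. n \<le> length xs \<longrightarrow> map Var xs \<in> K k" by blast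
  define S0 where "S0 = map Var (replicate n 0)"
  have S0: "S0 \<in> K k" using n[rule_format, of "replicate n 0"] unfolding S0_def by simp
  have a: "\<forall>x. Var x \<in> T (Arr k (Psi Top))"
  proof (intro allI, simp, intro allI impI)
    fix x z S assume "S \<in> K k"
    then have SL: "S \<in> L" using K_L by blast
    show "apps (Var x) S \<in> NS" unfolding NS_def
    proof (clarify)
      fix z' S' assume "S' \<in> L"
      then have "map (ren z') S @ S' \<in> L" using SL L_ren by simp
      then have "\<forall>N\<in>set (map (ren z') S @ S'). sn N" unfolding L_def by blast
      then have "sn (apps (Var x) (map (ren z') S @ S'))" by (rule sn_Var_apps)
      then show "sn (apps (ren z' (apps (Var x) S)) S')" by (simp add: ren_apps)
    qed
  qed
  have b: "sn (apps M S0)" if "M \<in> T (Arr k (Psi Top))" for M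
  proof -
    have "\<forall>z S. S \<in> K k \<longrightarrow> apps (ren z M) S \<in> NS" using that by simp
    then have "apps (ren id M) S0 \<in> NS" using S0 by blast
    then have "sn (apps (ren id (apps (ren id M) S0)) [])" unfolding NS_def using L_Nil by blast
    then show ?thesis by simp
  qed
  have "Omg \<notin> T (Arr k (Psi Top))" using b not_sn_Omg sn_apps by blast
  then show ?case using a b sn_apps by blast
next
  case (2 a b)
  then show ?case by auto
next
  case 3
  then show ?case by (auto simp: L_def)
next
  case (4 d k)
  then obtain n where n: "\<forall>xs. n \<le> length xs \<longrightarrow> map Var xs \<in> K k" by blast
  have "\<forall>xs. Suc n \<le> length xs \<longrightarrow> map Var xs \<in> K (ty.Prod d k)"
  proof (intro allI impI)
    fix xs :: "nat list" assume "Suc n \<le> length xs"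
    then obtain x xs' where "xs = x # xs'" "n \<le> length xs'" by (cases xs) auto
    then show "map Var xs \<in> K (ty.Prod d k)" using n 4 by simp
  qed
  then show ?case by blast
next
  case (5 a b)
  then obtain n m where n: "\<forall>xs. n \<le> length xs \<longrightarrow> map Var xs \<in> K a" and m: "\<forall>xs. m \<le> length xs \<longrightarrow> map Var xs \<in> K b" by blast
  have "\<forall>xs. max n m \<le> length xs \<longrightarrow> map Var xs \<in> K (Meet a b)" using n m by simp
  then show ?case by blast
qed

lemma rtyp_rjudg: "rtyp G M t D \<Longrightarrow> rjudg G D t"
  by (cases rule: rtyp.cases) auto

lemma look_dropE[simp]: "look (dropE E) x = look E (Suc x)"
  by (simp add: look_def dropE_def)

definition valid :: "env \<Rightarrow> env \<Rightarrow> (nat \<Rightarrow> trm) \<Rightarrow> (nat \<Rightarrow> trm list) \<Rightarrow> bool" where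
  "valid G D s t \<longleftrightarrow> (\<forall>x. s x \<in> T (look G x)) \<and> (\<forall>a. t a \<in> K (look D a))"

lemma valid_ren: "valid G D s t \<Longrightarrow> valid G D (\<lambda>i. ren z (s i)) (\<lambda>a. map (ren z) (t a))"
  by (simp add: valid_def T_ren K_ren)

lemma ren_sub': "ren z' (sub M s z t) = sub M (\<lambda>i. ren z' (s i)) (\<lambda>a. z' (z a)) (\<lambda>a. map (ren z') (t a))"
  unfolding ren_def[abs_def] by (simp add: ren_sub_Var)

lemma ArrPsi_intro:
  assumes cl: "\<forall>X\<in>Q. \<forall>z. ren z X \<in> Q"
    and main: "\<forall>X\<in>Q. \<forall>S\<in>K k. \<forall>S'\<in>L. sn (apps X (S @ S'))"
    and X: "X \<in> Q"
  shows "X \<in> T (Arr k (Psi Top))"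
proof (simp, intro allI impI)
  fix z S assume S: "S \<in> K k"
  show "apps (ren z X) S \<in> NS" unfolding NS_def
  proof (clarify)
    fix z' S' assume S': "S' \<in> L"
    have "ren (\<lambda>a. z' (z a)) X \<in> Q" using cl X by blast
    moreover have "map (ren z') S \<in> K k" using K_ren S by blast
    ultimately have "sn (apps (ren (\<lambda>a. z' (z a)) X) (map (ren z') S @ S'))" using main S' by blast
    then show "sn (apps (ren z' (apps (ren z X) S)) S')" by (simp add: ren_apps ren_ren)
  qed
qed

primrec cmdsem :: "cmd \<Rightarrow> (nat \<Rightarrow> trm) \<Rightarrow> (nat \<Rightarrow> nat) \<Rightarrow> (nat \<Rightarrow> trm list) \<Rightarrow> trm \<times> trm list" where
  "cmdsem (Named a M) s z t = (sub M s z t, t a)"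

lemma MU_SUB: "subc (subc C (\<lambda>i. liftN 0 (s i)) (upZ z) (upT t)) Var id (stS S) =
   subc C (\<lambda>i. liftN 0 (s i)) (upZ z) (\<lambda>a. case a of 0 \<Rightarrow> map (liftN 0) S | Suc b \<Rightarrow> map (liftN 0) (t b))"
proof -
  have e1: "(\<lambda>i. sub (liftN 0 (s i)) Var id (stS S)) = (\<lambda>i. liftN 0 (s i))"
    by (rule ext) (simp add: stS_def flip: liftN0_sub)
  have e2: "(\<lambda>a. map (\<lambda>X. sub X Var id (stS S)) (upT t a) @ stS S (upZ z a)) =
     (\<lambda>a. case a of 0 \<Rightarrow> map (liftN 0) S | Suc b \<Rightarrow> map (liftN 0) (t b))"
    by (rule ext) (simp add: stS_def upT_def upZ_def o_def split: nat.split flip: liftN0_sub)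
  show ?thesis by (simp add: comp e1 e2 del: sub_liftN0)
qed

lemma rjudg_Arr: "rjudg G D (Arr k r) \<Longrightarrow> r = Psi Top \<and> rC k"
  unfolding rjudg_def by (auto elim: rD_ArrE rC_ArrE)

lemma valid_cons0: "valid (dropE G) D s t \<Longrightarrow> N \<in> T (look G 0) \<Longrightarrow> valid G D (cons0 N s) t"
  unfolding valid_def by (auto simp: cons0_def split: nat.split)

lemma sem_sound:
  "rtyp G M t D \<Longrightarrow> (\<forall>s z u. valid G D s u \<longrightarrow> sub M s z u \<in> T t)"
  "rtypc G C t D \<Longrightarrow> (\<forall>s z u. valid G D s u \<longrightarrow> cmdsem C s z u \<in> cs t)"
proof (induction rule: rtyp_rtypc.inducts)
  case (Ax G x d D)
  then have "look G x = d" by (simp add: look_def)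
  then show ?case by (auto simp: valid_def)
next
  case (Abs G M k r D)
  have "rD (Arr (ty.Prod (look G 0) k) r)" using Abs.hyps(2) unfolding rjudg_def by (auto elim: rC_ArrE)
  then have r: "r = Psi Top" and rk: "rC (ty.Prod (look G 0) k)" by (auto elim: rD_ArrE)
  then have rd: "rD (look G 0)" by (auto elim: rC_ProdE)
  have nU: "T (look G 0) \<noteq> UNIV" using restr(1)[OF rd] by blast
  define Q where "Q = {sub (Lam M) s z u | s z u. valid (dropE G) D s u}"
  have cl: "\<forall>X\<in>Q. \<forall>z. ren z X \<in> Q"
  proof (intro ballI allI)
    fix X z' assume "X \<in> Q"
    then obtain s z u where X: "X = sub (Lam M) s z u" and v: "valid (dropE G) D s u" unfolding Q_def by blast
    have "ren z' X = sub (Lam M) (\<lambda>i. ren z' (s i)) (\<lambda>a. z' (z a)) (\<lambda>a. map (ren z') (u a))"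
      unfolding X by (rule ren_sub')
    then show "ren z' X \<in> Q" unfolding Q_def using valid_ren[OF v] by blast
  qed
  have main: "\<forall>X\<in>Q. \<forall>S\<in>K (ty.Prod (look G 0) k). \<forall>S'\<in>L. sn (apps X (S @ S'))"
  proof (intro ballI)
    fix X S S' assume XQ: "X \<in> Q" and S: "S \<in> K (ty.Prod (look G 0) k)" and S': "S' \<in> L"
    then obtain s z u where X: "X = sub (Lam M) s z u" and v: "valid (dropE G) D s u" unfolding Q_def by blast
    obtain N S1 where S1: "S = N # S1" "N \<in> T (look G 0)" "sn N" "S1 \<in> K k"
      using S nU by (cases S) (auto split: if_splits)
    define Y where "Y = sub M (cons0 N s) z u"
    have "valid G D (cons0 N s) u" using valid_cons0[OF v S1(2)] .
    then have "Y \<in> T (Arr k r)" using Abs.IH Y_def by blast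
    then have "\<forall>z' S. S \<in> K k \<longrightarrow> apps (ren z' Y) S \<in> NS" using r by simp
    then have "apps (ren id Y) S1 \<in> NS" using S1(4) by blast
    then have "sn (apps (ren id (apps (ren id Y) S1)) S')" using S' unfolding NS_def by blast
    then have "sn (apps Y (S1 @ S'))" by simp
    then have "sn (apps (substV (sub M (upV s) z (\<lambda>a. map (liftV 0) (u a))) 0 N) (S1 @ S'))"
      by (simp add: BETA_SUB Y_def)
    then have "sn (apps (App (Lam (sub M (upV s) z (\<lambda>a. map (liftV 0) (u a)))) N) (S1 @ S'))"
      using beta_sat S1(3) by blast
    then show "sn (apps X (S @ S'))" using X S1(1) by simp
  qed
  show ?case
  proof (intro allI impI)
    fix s z u assume v: "valid (dropE G) D s u"
    have "sub (Lam M) s z u \<in> Q" unfolding Q_def using v by blast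
    then have "sub (Lam M) s z u \<in> T (Arr (ty.Prod (look G 0) k) (Psi Top))"
      by (rule ArrPsi_intro[OF cl main])
    then show "sub (Lam M) s z u \<in> T (Arr (ty.Prod (look G 0) k) r)" using r by simp
  qed
next
  case (App G M d k r D N)
  have "rjudg G D (Arr (ty.Prod d k) r)" using App.hyps(1) by (rule rtyp_rjudg)
  then have "rC (ty.Prod d k)" using rjudg_Arr by blast
  then have "rD d" by (auto elim: rC_ProdE)
  then have snd: "\<forall>M\<in>T d. sn M" using restr(1) by blast
  show ?case
  proof (intro allI impI)
    fix s z u assume v: "valid G D s u"
    have hM: "\<forall>z' S. S \<in> K (ty.Prod d k) \<longrightarrow> apps (ren z' (sub M s z u)) S \<in> T r"
      using App.IH(1) v by simp
    have hN: "sub N s z u \<in> T d" using App.IH(2) v by blast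
    show "sub (App M N) s z u \<in> T (Arr k r)"
    proof (simp, intro allI impI)
      fix z' S assume S: "S \<in> K k"
      have "ren z' (sub N s z u) \<in> T d" using T_ren hN by blast
      then have "ren z' (sub N s z u) # S \<in> K (ty.Prod d k)" using S snd by simp
      then have "apps (ren z' (sub M s z u)) (ren z' (sub N s z u) # S) \<in> T r" using hM by blast
      then show "apps (App (ren z' (sub M s z u)) (ren z' (sub N s z u))) S \<in> T r" by simp
    qed
  qed
next
  case (Cmd G M d D a)
  then show ?case by (auto simp: valid_def)
next
  case (MuR G C k' r D)
  have r: "r = Psi Top" using MuR.hyps(2) rjudg_Arr by blast
  define Q where "Q = {sub (Mu C) s z u | s z u. valid G (dropE D) s u}"
  have cl: "\<forall>X\<in>Q. \<forall>z. ren z X \<in> Q"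
  proof (intro ballI allI)
    fix X z' assume "X \<in> Q"
    then obtain s z u where X: "X = sub (Mu C) s z u" and v: "valid G (dropE D) s u" unfolding Q_def by blast
    have "ren z' X = sub (Mu C) (\<lambda>i. ren z' (s i)) (\<lambda>a. z' (z a)) (\<lambda>a. map (ren z') (u a))"
      unfolding X by (rule ren_sub')
    then show "ren z' X \<in> Q" unfolding Q_def using valid_ren[OF v] by blast
  qed
  have main: "\<forall>X\<in>Q. \<forall>S\<in>K (look D 0). \<forall>S'\<in>L. sn (apps X (S @ S'))"
  proof (intro ballI)
    fix X S S' assume XQ: "X \<in> Q" and S: "S \<in> K (look D 0)" and S': "S' \<in> L"
    then obtain s z u where X: "X = sub (Mu C) s z u" and v: "valid G (dropE D) s u" unfolding Q_def by blast
    define S2 where "S2 = S @ S'"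
    have S2: "S2 \<in> K (look D 0)" unfolding S2_def using K_append S S' by blast
    then have S2L: "\<forall>x\<in>set S2. sn x" using K_L unfolding L_def by blast
    define s2 where "s2 = (\<lambda>i. liftN 0 (s i))"
    define u2 where "u2 = (\<lambda>a. case a of 0 \<Rightarrow> map (liftN 0) S2 | Suc b \<Rightarrow> map (liftN 0) (u b))"
    have v2: "valid G D s2 u2"
      using v S2 unfolding valid_def s2_def u2_def liftN0_fun ren_def[symmetric]
      by (auto simp: T_ren K_ren split: nat.split)
    obtain a M0 where C: "C = Named a M0" by (cases C)
    have "cmdsem C s2 (upZ z) u2 \<in> cs (ty.Prod (Arr k' r) k')" using MuR.IH v2 by blast
    then have h1: "sub M0 s2 (upZ z) u2 \<in> T (Arr k' (Psi Top))" and h2: "u2 a \<in> L \<longrightarrow> u2 a \<in> K k'"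
      using C r by auto
    have "u2 a \<in> L" using v2 K_L unfolding valid_def by blast
    then have "u2 a \<in> K k'" using h2 by blast
    moreover have "\<forall>z' S. S \<in> K k' \<longrightarrow> apps (ren z' (sub M0 s2 (upZ z) u2)) S \<in> NS" using h1 by simp
    ultimately have "apps (ren id (sub M0 s2 (upZ z) u2)) (u2 a) \<in> NS" by blast
    then have "sn (apps (ren id (apps (ren id (sub M0 s2 (upZ z) u2)) (u2 a))) [])" unfolding NS_def using L_Nil by blast
    then have "sn (Mu (Named (upZ z a) (apps (sub M0 s2 (upZ z) u2) (u2 a))))" by (simp add: sn_Mu_Named)
    then have "sn (Mu (subc C s2 (upZ z) u2))" using C by simp
    then have "sn (Mu (subc (subc C s2 (upZ z) (upT u)) Var id (stS S2)))"
      unfolding s2_def u2_def MU_SUB .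
    then have "sn (apps (Mu (subc C s2 (upZ z) (upT u))) S2)" using mu_sat S2L by blast
    then show "sn (apps X (S @ S'))" using X unfolding S2_def s2_def by simp
  qed
  show ?case
  proof (intro allI impI)
    fix s z u assume v: "valid G (dropE D) s u"
    have "sub (Mu C) s z u \<in> Q" unfolding Q_def using v by blast
    then have "sub (Mu C) s z u \<in> T (Arr (look D 0) (Psi Top))"
      by (rule ArrPsi_intro[OF cl main])
    then show "sub (Mu C) s z u \<in> T (Arr (look D 0) r)" using r by simp
  qed
next
  case (MeetT G M s t D)
  then show ?case by auto
next
  case (MeetC G C s t D)
  then show ?case by auto
next
  case (SubT G M s t D)
  then show ?case using leq_sound(1) by blast
next
  case (SubC G C s t D)
  then show ?case using leq_sound(2) by blast
qed

theorem theorem6p15: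
  assumes "rbasis G" and "rctxt D" and "rD d" and "rtyp G M d D"
  shows "SN M"
proof -
  have rCD: "rC (look D a)" for a
  proof (cases "D a")
    case None then show ?thesis by (simp add: look_def rD_rC.intros(3))
  next
    case (Some t)
    then have "t \<in> ran D" by (rule ranI)
    then show ?thesis using assms(2) Some unfolding rctxt_def look_def by simp
  qed
  have varG: "Var x \<in> T (look G x)" for x
  proof (cases "G x")
    case None then show ?thesis by (simp add: look_def)
  next
    case (Some t)
    then have "t \<in> ran G" by (rule ranI)
    then have "rD t" using assms(1) unfolding rbasis_def by simp
    then show ?thesis using restr(1) Some unfolding look_def by simp
  qed
  define n where "n a = (SOME n. \<forall>xs. n \<le> length xs \<longrightarrow> map Var xs \<in> K (look D a))" for a
  define u where "u a = map Var (replicate (n a) 0)" for a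
  have "u a \<in> K (look D a)" for a
  proof -
    have "\<exists>n. \<forall>xs. n \<le> length xs \<longrightarrow> map Var xs \<in> K (look D a)" using restr(2)[OF rCD] .
    then have "\<forall>xs. n a \<le> length xs \<longrightarrow> map Var xs \<in> K (look D a)" unfolding n_def by (rule someI_ex)
    from this[rule_format, of "replicate (n a) 0"] show ?thesis unfolding u_def by simp
  qed
  then have "valid G D Var u" unfolding valid_def using varG by simp
  then have "sub M Var id u \<in> T d" using sem_sound(1)[OF assms(4)] by blast
  then have "sn (sub M Var id u)" using restr(1)[OF assms(3)] by blast
  then have "sn M" by (rule sn_sub_refl)
  then show ?thesis by (rule sn_SN)
qed

end
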